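(* For $r\ge 2$, let $H(r)$ be the graph on vertex set $\{1,\dots,2r+4\}$ in which $V_1=\{1,\dots,r+2\}$ and $V_2=\{r+3,\dots,2r+4\}$ each induce a complete graph, and the only edges between $V_1$ and $V_2$ are $\{i,r+2+i\}$ for $i=1,\dots,r$. Then $\operatorname{Z}(H(r))=\overline{\operatorname{Z}}(H(r))=r+2$ and $\underline{z_0}(H(r))=z_0(H(r))=2r+2=\overline{\operatorname{Z}}(H(r))+r$.
   Context: Zero forcing on a graph $G$: starting with a set $S$ of blue vertices (others white), a blue vertex $v$ may change a white vertex $w$ to blue if $w$ is the only white neighbor of $v$. $S$ is a zero forcing set if repeated application colors all of $V(G)$ blue. $\operatorname{Z}(G)$ is the minimum size of a zero forcing set, $\overline{\operatorname{Z}}(G)$ the maximum size of a minimal (under inclusion) zero forcing set. $\mathscr{Z}^{\rm TAR}(G)$ has vertices the zero forcing sets of $G$, two adjacent iff their symmetric difference has size 1; $\mathscr{Z}^{\rm TAR}_k(G)$ is its subgraph induced by zero forcing sets of size at most $k$. $\underline{z_0}(G)$ is the least $k$ with $\mathscr{Z}^{\rm TAR}_k(G)$ connected; $z_0(G)$ is the least $k$ such that $\mathscr{Z}^{\rm TAR}_i(G)$ is connected for every $i=k,\dots,|V(G)|$. *)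

theory Defs
  imports Main
begin

text \<open>Simple graphs are given by a vertex set V and a (symmetric, irreflexive)
edge relation E.\<close>

inductive_set zf_closure :: "'a set \<Rightarrow> ('a \<Rightarrow> 'a \<Rightarrow> bool) \<Rightarrow> 'a set \<Rightarrow> 'a set"
  for V :: "'a set" and E :: "'a \<Rightarrow> 'a \<Rightarrow> bool" and S :: "'a set"
where
  init: "x \<in> S \<Longrightarrow> x \<in> zf_closure V E S"
| force: "\<lbrakk> v \<in> zf_closure V E S; v \<in> V; w \<in> V; E v w;
            \<forall>u\<in>V. E v u \<and> u \<noteq> w \<longrightarrow> u \<in> zf_closure V E S \<rbrakk>
          \<Longrightarrow> w \<in> zf_closure V E S"

definition zero_forcing_set :: "'a set \<Rightarrow> ('a \<Rightarrow> 'a \<Rightarrow> bool) \<Rightarrow> 'a set \<Rightarrow> bool" where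
  "zero_forcing_set V E S \<longleftrightarrow> S \<subseteq> V \<and> zf_closure V E S = V"

definition minimal_zero_forcing_set :: "'a set \<Rightarrow> ('a \<Rightarrow> 'a \<Rightarrow> bool) \<Rightarrow> 'a set \<Rightarrow> bool" where
  "minimal_zero_forcing_set V E S \<longleftrightarrow>
     zero_forcing_set V E S \<and> (\<forall>T. T \<subset> S \<longrightarrow> \<not> zero_forcing_set V E T)"

definition Z :: "'a set \<Rightarrow> ('a \<Rightarrow> 'a \<Rightarrow> bool) \<Rightarrow> nat" where
  "Z V E = Min (card ` {S. zero_forcing_set V E S})"

definition Zbar :: "'a set \<Rightarrow> ('a \<Rightarrow> 'a \<Rightarrow> bool) \<Rightarrow> nat" where
  "Zbar V E = Max (card ` {S. minimal_zero_forcing_set V E S})"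

definition TAR_vertices :: "'a set \<Rightarrow> ('a \<Rightarrow> 'a \<Rightarrow> bool) \<Rightarrow> nat \<Rightarrow> 'a set set" where
  "TAR_vertices V E k = {S. zero_forcing_set V E S \<and> card S \<le> k}"

definition TAR_adj :: "'a set \<Rightarrow> 'a set \<Rightarrow> bool" where
  "TAR_adj S T \<longleftrightarrow> card ((S - T) \<union> (T - S)) = 1"

definition TAR_connected :: "'a set \<Rightarrow> ('a \<Rightarrow> 'a \<Rightarrow> bool) \<Rightarrow> nat \<Rightarrow> bool" where
  "TAR_connected V E k \<longleftrightarrow> TAR_vertices V E k \<noteq> {} \<and>
     (\<forall>S\<in>TAR_vertices V E k. \<forall>T\<in>TAR_vertices V E k.
        (S, T) \<in> {(A, B). A \<in> TAR_vertices V E k \<and> B \<in> TAR_vertices V E k \<and> TAR_adj A B}\<^sup>*)"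

definition z0_lower :: "'a set \<Rightarrow> ('a \<Rightarrow> 'a \<Rightarrow> bool) \<Rightarrow> nat" where
  "z0_lower V E = (LEAST k. TAR_connected V E k)"

definition z0 :: "'a set \<Rightarrow> ('a \<Rightarrow> 'a \<Rightarrow> bool) \<Rightarrow> nat" where
  "z0 V E = (LEAST k. \<forall>i. k \<le> i \<and> i \<le> card V \<longrightarrow> TAR_connected V E i)"

definition H_V :: "nat \<Rightarrow> nat set" where
  "H_V r = {1..2*r+4}"

definition H_E :: "nat \<Rightarrow> nat \<Rightarrow> nat \<Rightarrow> bool" where
  "H_E r i j \<longleftrightarrow> i \<in> H_V r \<and> j \<in> H_V r \<and> i \<noteq> j \<and>
     ((i \<le> r+2 \<and> j \<le> r+2) \<or> (r+3 \<le> i \<and> r+3 \<le> j) \<or>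
      (1 \<le> i \<and> i \<le> r \<and> j = r+2+i) \<or> (1 \<le> j \<and> j \<le> r \<and> i = r+2+j))"

end

theory Submission
  imports Defs
begin

definition W1 :: "nat \<Rightarrow> nat set" where "W1 r = {1..r+2}"
definition W2 :: "nat \<Rightarrow> nat set" where "W2 r = {r+3..2*r+4}"

definition F1 :: "nat \<Rightarrow> nat set \<Rightarrow> bool" where
  "F1 r S \<longleftrightarrow> card (S \<inter> W1 r) \<ge> r+1 \<and> (2*r+3 \<in> S \<or> 2*r+4 \<in> S)"
definition F2 :: "nat \<Rightarrow> nat set \<Rightarrow> bool" where
  "F2 r S \<longleftrightarrow> card (S \<inter> W2 r) \<ge> r+1 \<and> (r+1 \<in> S \<or> r+2 \<in> S)"

lemma cl_sub: assumes "S \<subseteq> V" shows "zf_closure V E S \<subseteq> V"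
proof
  fix x assume "x \<in> zf_closure V E S"
  then show "x \<in> V" by (induction rule: zf_closure.induct) (use assms in auto)
qed

lemma cl_inv:
  assumes "S \<subseteq> I"
    and "\<And>v w. v \<in> I \<Longrightarrow> v \<in> V \<Longrightarrow> w \<in> V \<Longrightarrow> E v w \<Longrightarrow> (\<forall>u\<in>V. E v u \<and> u \<noteq> w \<longrightarrow> u \<in> I) \<Longrightarrow> w \<in> I"
  shows "zf_closure V E S \<subseteq> I"
proof
  fix x assume "x \<in> zf_closure V E S"
  then show "x \<in> I"
  proof (induction rule: zf_closure.induct)
    case (init x) then show ?case using assms(1) by auto
  next
    case (force v w) then show ?case using assms(2)[of v w] by blast
  qed
qed

lemma card_W1: "card (W1 r) = r+2" by (simp add: W1_def)
lemma card_W2: "card (W2 r) = r+2" by (simp add: W2_def)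
lemma HV_split: "H_V r = W1 r \<union> W2 r" by (auto simp: H_V_def W1_def W2_def)
lemma W_disj: "W1 r \<inter> W2 r = {}" by (auto simp: W1_def W2_def)

lemma two_out:
  assumes "card (S \<inter> W) \<ge> card W - 1" "finite W" "u \<in> W" "u \<notin> S" "y \<in> W" "y \<noteq> u"
  shows "y \<in> S"
proof (rule ccontr)
  assume "y \<notin> S"
  then have "S \<inter> W \<subseteq> W - {u,y}" using assms by auto
  then have "card (S \<inter> W) \<le> card (W - {u,y})" using assms(2) by (intro card_mono) auto
  also have "\<dots> = card W - 2" using assms by (subst card_Diff_subset) auto
  finally have "card (S \<inter> W) \<le> card W - 2" .
  moreover have "card {u,y} \<le> card W" using assms by (intro card_mono) auto
  ultimately show False using assms(1,6) by simp
qed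



lemma E1: "v \<in> {r+1,r+2} \<Longrightarrow> H_E r v y \<Longrightarrow> y \<in> W1 r"
  by (auto simp: H_E_def H_V_def W1_def)
lemma E2: "1 \<le> i \<Longrightarrow> i \<le> r \<Longrightarrow> H_E r i u \<Longrightarrow> u \<noteq> r+2+i \<Longrightarrow> u \<in> W1 r"
  by (auto simp: H_E_def H_V_def W1_def)
lemma E3: "x \<in> {2*r+3,2*r+4} \<Longrightarrow> y \<in> {2*r+3,2*r+4} \<Longrightarrow> x \<noteq> y \<Longrightarrow> H_E r x u \<Longrightarrow> u \<noteq> y \<Longrightarrow> u \<in> {r+3..2*r+2}"
  by (auto simp: H_E_def H_V_def)

lemma suff1:
  assumes S: "S \<subseteq> H_V r" and F: "F1 r S"
  shows "zf_closure (H_V r) (H_E r) S = H_V r"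
proof -
  let ?C = "zf_closure (H_V r) (H_E r) S"
  have c1: "card (S \<inter> W1 r) \<ge> card (W1 r) - 1" using F by (simp add: F1_def card_W1)
  have fW: "finite (W1 r)" by (simp add: W1_def)
  have one: "y \<in> S" if "u \<in> W1 r" "u \<notin> S" "y \<in> W1 r" "y \<noteq> u" for u y
    using two_out[OF c1 fW that] .
  have V1: "W1 r \<subseteq> ?C"
  proof
    fix u assume u: "u \<in> W1 r"
    show "u \<in> ?C"
    proof cases
      assume "u \<in> S" then show ?thesis by (rule zf_closure.init)
    next
      assume uS: "u \<notin> S"
      define v where "v = (if u = r+1 then r+2 else r+1)"
      have v: "v \<in> {r+1,r+2}" "v \<noteq> u" unfolding v_def by auto
      have vW: "v \<in> W1 r" using v by (auto simp: W1_def)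
      have vS: "v \<in> S" using one[OF u uS vW v(2)] .
      show ?thesis
      proof (rule zf_closure.force[where v=v])
        show "v \<in> ?C" using vS by (rule zf_closure.init)
        show "v \<in> H_V r" "u \<in> H_V r" using vW u by (auto simp: H_V_def W1_def)
        show "H_E r v u" using v u by (auto simp: H_V_def H_E_def W1_def)
        show "\<forall>y\<in>H_V r. H_E r v y \<and> y \<noteq> u \<longrightarrow> y \<in> ?C"
        proof (intro ballI impI)
          fix y assume "y \<in> H_V r" "H_E r v y \<and> y \<noteq> u"
          then have "y \<in> W1 r" "y \<noteq> u" using E1[OF v(1)] by auto
          then have "y \<in> S" using one[OF u uS] by blast
          then show "y \<in> ?C" by (rule zf_closure.init)
        qed
      qed
    qed
  qed
  have B: "{r+3..2*r+2} \<subseteq> ?C"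
  proof
    fix y assume y: "y \<in> {r+3..2*r+2}"
    define i where "i = y - (r+2)"
    have i: "1 \<le> i" "i \<le> r" "y = r+2+i" using y by (auto simp: i_def)
    show "y \<in> ?C"
    proof (rule zf_closure.force[where v=i])
      show "i \<in> ?C" using V1 i by (auto simp: W1_def)
      show "i \<in> H_V r" "y \<in> H_V r" "H_E r i y" using i by (auto simp: H_V_def H_E_def)
      show "\<forall>u\<in>H_V r. H_E r i u \<and> u \<noteq> y \<longrightarrow> u \<in> ?C"
      proof (intro ballI impI)
        fix u assume "u \<in> H_V r" "H_E r i u \<and> u \<noteq> y"
        then have "u \<in> W1 r" using E2[OF i(1,2)] i(3) by blast
        then show "u \<in> ?C" using V1 by auto
      qed
    qed
  qed
  have CDgen: "y \<in> ?C" if xy: "x \<in> S" "x \<in> {2*r+3,2*r+4}" "y \<in> {2*r+3,2*r+4}" "x \<noteq> y" for x y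
  proof cases
    assume "y \<in> S" then show ?thesis by (rule zf_closure.init)
  next
    assume "y \<notin> S"
    show ?thesis
    proof (rule zf_closure.force[where v=x])
      show "x \<in> ?C" using xy by (blast intro: zf_closure.init)
      show "x \<in> H_V r" "y \<in> H_V r" "H_E r x y" using xy by (auto simp: H_V_def H_E_def)
      show "\<forall>u\<in>H_V r. H_E r x u \<and> u \<noteq> y \<longrightarrow> u \<in> ?C"
      proof (intro ballI impI)
        fix u assume u: "u \<in> H_V r" "H_E r x u \<and> u \<noteq> y"
        then have "u \<in> {r+3..2*r+2}" using E3[OF xy(2,3,4)] by blast
        then show "u \<in> ?C" using B by auto
      qed
    qed
  qed
  have CD: "2*r+3 \<in> ?C" "2*r+4 \<in> ?C"
  proof -
    have "2*r+3 \<in> S \<or> 2*r+4 \<in> S" using F by (simp add: F1_def)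
    then show "2*r+3 \<in> ?C" "2*r+4 \<in> ?C"
      using CDgen[of "2*r+3" "2*r+4"] CDgen[of "2*r+4" "2*r+3"] zf_closure.init by auto
  qed
  have "H_V r \<subseteq> ?C"
  proof
    fix z assume "z \<in> H_V r"
    then have "z \<in> W1 r \<or> z \<in> {r+3..2*r+2} \<or> z = 2*r+3 \<or> z = 2*r+4" by (auto simp: H_V_def W1_def)
    then show "z \<in> ?C" using V1 B CD by blast
  qed
  then show ?thesis using cl_sub[OF S] by blast
qed


lemma E1': "v \<in> {2*r+3,2*r+4} \<Longrightarrow> H_E r v y \<Longrightarrow> y \<in> W2 r"
  by (auto simp: H_E_def H_V_def W2_def)
lemma E2': "1 \<le> i \<Longrightarrow> i \<le> r \<Longrightarrow> H_E r (r+2+i) u \<Longrightarrow> u \<noteq> i \<Longrightarrow> u \<in> W2 r"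
  by (auto simp: H_E_def H_V_def W2_def)
lemma E3': "x \<in> {r+1,r+2} \<Longrightarrow> y \<in> {r+1,r+2} \<Longrightarrow> x \<noteq> y \<Longrightarrow> H_E r x u \<Longrightarrow> u \<noteq> y \<Longrightarrow> u \<in> {1..r}"
  by (auto simp: H_E_def H_V_def)

lemma suff2:
  assumes S: "S \<subseteq> H_V r" and F: "F2 r S"
  shows "zf_closure (H_V r) (H_E r) S = H_V r"
proof -
  let ?C = "zf_closure (H_V r) (H_E r) S"
  have c1: "card (S \<inter> W2 r) \<ge> card (W2 r) - 1" using F by (simp add: F2_def card_W2)
  have fW: "finite (W2 r)" by (simp add: W2_def)
  have one: "y \<in> S" if "u \<in> W2 r" "u \<notin> S" "y \<in> W2 r" "y \<noteq> u" for u y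
    using two_out[OF c1 fW that] .
  have V2: "W2 r \<subseteq> ?C"
  proof
    fix u assume u: "u \<in> W2 r"
    show "u \<in> ?C"
    proof cases
      assume "u \<in> S" then show ?thesis by (rule zf_closure.init)
    next
      assume uS: "u \<notin> S"
      define v where "v = (if u = 2*r+3 then 2*r+4 else 2*r+3)"
      have v: "v \<in> {2*r+3,2*r+4}" "v \<noteq> u" unfolding v_def by auto
      have vW: "v \<in> W2 r" using v by (auto simp: W2_def)
      have vS: "v \<in> S" using one[OF u uS vW v(2)] .
      show ?thesis
      proof (rule zf_closure.force[where v=v])
        show "v \<in> ?C" using vS by (rule zf_closure.init)
        show "v \<in> H_V r" "u \<in> H_V r" using vW u by (auto simp: H_V_def W2_def)
        show "H_E r v u" using v u by (auto simp: H_V_def H_E_def W2_def)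
        show "\<forall>y\<in>H_V r. H_E r v y \<and> y \<noteq> u \<longrightarrow> y \<in> ?C"
        proof (intro ballI impI)
          fix y assume "y \<in> H_V r" "H_E r v y \<and> y \<noteq> u"
          then have "y \<in> W2 r" "y \<noteq> u" using E1'[OF v(1)] by auto
          then have "y \<in> S" using one[OF u uS] by blast
          then show "y \<in> ?C" by (rule zf_closure.init)
        qed
      qed
    qed
  qed
  have B: "{1..r} \<subseteq> ?C"
  proof
    fix i assume y: "i \<in> {1..r}"
    have i: "1 \<le> i" "i \<le> r" using y by auto
    show "i \<in> ?C"
    proof (rule zf_closure.force[where v="r+2+i"])
      show "r+2+i \<in> ?C" using V2 i by (auto simp: W2_def)
      show "r+2+i \<in> H_V r" "i \<in> H_V r" "H_E r (r+2+i) i" using i by (auto simp: H_V_def H_E_def)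
      show "\<forall>u\<in>H_V r. H_E r (r+2+i) u \<and> u \<noteq> i \<longrightarrow> u \<in> ?C"
      proof (intro ballI impI)
        fix u assume "u \<in> H_V r" "H_E r (r+2+i) u \<and> u \<noteq> i"
        then have "u \<in> W2 r" using E2'[OF i(1,2)] by blast
        then show "u \<in> ?C" using V2 by auto
      qed
    qed
  qed
  have CDgen: "y \<in> ?C" if xy: "x \<in> S" "x \<in> {r+1,r+2}" "y \<in> {r+1,r+2}" "x \<noteq> y" for x y
  proof cases
    assume "y \<in> S" then show ?thesis by (rule zf_closure.init)
  next
    assume "y \<notin> S"
    show ?thesis
    proof (rule zf_closure.force[where v=x])
      show "x \<in> ?C" using xy by (blast intro: zf_closure.init)
      show "x \<in> H_V r" "y \<in> H_V r" "H_E r x y" using xy by (auto simp: H_V_def H_E_def)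
      show "\<forall>u\<in>H_V r. H_E r x u \<and> u \<noteq> y \<longrightarrow> u \<in> ?C"
      proof (intro ballI impI)
        fix u assume u: "u \<in> H_V r" "H_E r x u \<and> u \<noteq> y"
        then have "u \<in> {1..r}" using E3'[OF xy(2,3,4)] by blast
        then show "u \<in> ?C" using B by auto
      qed
    qed
  qed
  have CD: "r+1 \<in> ?C" "r+2 \<in> ?C"
  proof -
    have "r+1 \<in> S \<or> r+2 \<in> S" using F by (simp add: F2_def)
    then show "r+1 \<in> ?C" "r+2 \<in> ?C"
      using CDgen[of "r+1" "r+2"] CDgen[of "r+2" "r+1"] zf_closure.init by auto
  qed
  have "H_V r \<subseteq> ?C"
  proof
    fix z assume "z \<in> H_V r"
    then have "z \<in> W2 r \<or> z \<in> {1..r} \<or> z = r+1 \<or> z = r+2" by (auto simp: H_V_def W2_def)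
    then show "z \<in> ?C" using V2 B CD by blast
  qed
  then show ?thesis using cl_sub[OF S] by blast
qed


lemma N1: "w \<in> {r+1,r+2} \<Longrightarrow> H_E r v w \<Longrightarrow> v \<notin> {r+1,r+2} \<Longrightarrow> w' \<in> {r+1,r+2} \<Longrightarrow> w' \<noteq> w \<Longrightarrow> H_E r v w'"
  by (auto simp: H_E_def H_V_def)
lemma N2: "w \<in> {2*r+3,2*r+4} \<Longrightarrow> H_E r v w \<Longrightarrow> v \<notin> {2*r+3,2*r+4} \<Longrightarrow> w' \<in> {2*r+3,2*r+4} \<Longrightarrow> w' \<noteq> w \<Longrightarrow> H_E r v w'"
  by (auto simp: H_E_def H_V_def)
lemma EW1: "u \<in> W1 r \<Longrightarrow> v \<in> W1 r \<Longrightarrow> u \<noteq> v \<Longrightarrow> H_E r u v"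
  by (auto simp: H_E_def H_V_def W1_def)
lemma EW2: "u \<in> W2 r \<Longrightarrow> v \<in> W2 r \<Longrightarrow> u \<noteq> v \<Longrightarrow> H_E r u v"
  by (auto simp: H_E_def H_V_def W2_def)

lemma avoid:
  assumes "finite W" "card (S \<inter> W) + 2 \<le> card W"
  shows "\<exists>u\<in>W. u \<notin> S \<and> u \<noteq> w"
proof (rule ccontr)
  assume "\<not> ?thesis"
  then have "W \<subseteq> insert w (S \<inter> W)" by auto
  then have "card W \<le> card (insert w (S \<inter> W))" using assms(1) by (intro card_mono) auto
  also have "\<dots> \<le> card (S \<inter> W) + 1" using assms(1) by (simp add: card_insert_if)
  finally show False using assms(2) by simp
qed

lemma nec:
  assumes Z: "zero_forcing_set (H_V r) (H_E r) S"
  shows "F1 r S \<or> F2 r S"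
proof (rule ccontr)
  assume nF: "\<not> (F1 r S \<or> F2 r S)"
  let ?C = "zf_closure (H_V r) (H_E r) S"
  have S: "S \<subseteq> H_V r" and C: "?C = H_V r" using Z by (auto simp: zero_forcing_set_def)
  show False
  proof cases
    assume ab: "r+1 \<notin> S \<and> r+2 \<notin> S"
    let ?I = "H_V r - {r+1,r+2}"
    have "?C \<subseteq> ?I"
    proof (rule cl_inv)
      show "S \<subseteq> ?I" using S ab by auto
      fix v w assume v: "v \<in> ?I" "v \<in> H_V r" "w \<in> H_V r" "H_E r v w"
        and all: "\<forall>u\<in>H_V r. H_E r v u \<and> u \<noteq> w \<longrightarrow> u \<in> ?I"
      show "w \<in> ?I"
      proof (rule ccontr)
        assume "w \<notin> ?I"
        then have w: "w \<in> {r+1,r+2}" using v by auto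
        define w' where "w' = (if w = r+1 then r+2 else r+1)"
        have w': "w' \<in> {r+1,r+2}" "w' \<noteq> w" using w unfolding w'_def by auto
        have "H_E r v w'" using N1[OF w v(4) _ w'] v(1) by auto
        moreover have "w' \<in> H_V r" using w' by (auto simp: H_V_def)
        ultimately have "w' \<in> ?I" using all w' by auto
        then show False using w' by auto
      qed
    qed
    moreover have "r+1 \<in> H_V r" by (simp add: H_V_def)
    ultimately show False using C by auto
  next
    assume ab: "\<not> (r+1 \<notin> S \<and> r+2 \<notin> S)"
    show False
    proof cases
      assume cd: "2*r+3 \<notin> S \<and> 2*r+4 \<notin> S"
      let ?I = "H_V r - {2*r+3,2*r+4}"
      have "?C \<subseteq> ?I"
      proof (rule cl_inv)
        show "S \<subseteq> ?I" using S cd by auto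
        fix v w assume v: "v \<in> ?I" "v \<in> H_V r" "w \<in> H_V r" "H_E r v w"
          and all: "\<forall>u\<in>H_V r. H_E r v u \<and> u \<noteq> w \<longrightarrow> u \<in> ?I"
        show "w \<in> ?I"
        proof (rule ccontr)
          assume "w \<notin> ?I"
          then have w: "w \<in> {2*r+3,2*r+4}" using v by auto
          define w' where "w' = (if w = 2*r+3 then 2*r+4 else 2*r+3)"
          have w': "w' \<in> {2*r+3,2*r+4}" "w' \<noteq> w" using w unfolding w'_def by auto
          have "H_E r v w'" using N2[OF w v(4) _ w'] v(1) by auto
          moreover have "w' \<in> H_V r" using w' by (auto simp: H_V_def)
          ultimately have "w' \<in> ?I" using all w' by auto
          then show False using w' by auto
        qed
      qed
      moreover have "2*r+3 \<in> H_V r" by (simp add: H_V_def)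
      ultimately show False using C by auto
    next
      assume cd: "\<not> (2*r+3 \<notin> S \<and> 2*r+4 \<notin> S)"
      have s1: "card (S \<inter> W1 r) + 2 \<le> card (W1 r)" using nF cd by (auto simp: F1_def card_W1)
      have s2: "card (S \<inter> W2 r) + 2 \<le> card (W2 r)" using nF ab by (auto simp: F2_def card_W2)
      have "?C \<subseteq> S"
      proof (rule cl_inv)
        show "S \<subseteq> S" by simp
        fix v w assume v: "v \<in> S" "v \<in> H_V r" "w \<in> H_V r" "H_E r v w"
          and all: "\<forall>u\<in>H_V r. H_E r v u \<and> u \<noteq> w \<longrightarrow> u \<in> S"
        have "v \<in> W1 r \<or> v \<in> W2 r" using v(2) HV_split by auto
        then show "w \<in> S"
        proof
          assume vW: "v \<in> W1 r"
          obtain u where u: "u \<in> W1 r" "u \<notin> S" "u \<noteq> w"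
            using avoid[OF _ s1, of w] by (auto simp: W1_def)
          have "H_E r v u" using EW1[OF vW u(1)] u v(1) by auto
          moreover have "u \<in> H_V r" using u HV_split by auto
          ultimately show ?thesis using all u by auto
        next
          assume vW: "v \<in> W2 r"
          obtain u where u: "u \<in> W2 r" "u \<notin> S" "u \<noteq> w"
            using avoid[OF _ s2, of w] by (auto simp: W2_def)
          have "H_E r v u" using EW2[OF vW u(1)] u v(1) by auto
          moreover have "u \<in> H_V r" using u HV_split by auto
          ultimately show ?thesis using all u by auto
        qed
      qed
      then have "H_V r \<subseteq> S" using C by auto
      then have "W1 r \<subseteq> S" using HV_split by auto
      then have "S \<inter> W1 r = W1 r" by auto
      then show False using s1 by simp
    qed
  qed
qed

lemma zfs_iff: "zero_forcing_set (H_V r) (H_E r) S \<longleftrightarrow> S \<subseteq> H_V r \<and> (F1 r S \<or> F2 r S)"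
proof
  assume Z: "zero_forcing_set (H_V r) (H_E r) S"
  then have "S \<subseteq> H_V r" by (simp add: zero_forcing_set_def)
  with nec[OF Z] show "S \<subseteq> H_V r \<and> (F1 r S \<or> F2 r S)" by simp
next
  assume R: "S \<subseteq> H_V r \<and> (F1 r S \<or> F2 r S)"
  then have "zf_closure (H_V r) (H_E r) S = H_V r" using suff1[of S r] suff2[of S r] by (elim conjE disjE) simp_all
  with R show "zero_forcing_set (H_V r) (H_E r) S" by (simp add: zero_forcing_set_def)
qed


lemma fin_HV: "finite (H_V r)" by (simp add: H_V_def)

lemma card_split: assumes "X \<subseteq> H_V r" shows "card X = card (X \<inter> W1 r) + card (X \<inter> W2 r)"
proof -
  have f: "finite X" using assms fin_HV finite_subset by blast
  have "X = (X \<inter> W1 r) \<union> (X \<inter> W2 r)" using assms HV_split by auto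
  then have "card X = card ((X \<inter> W1 r) \<union> (X \<inter> W2 r))" by simp
  also have "\<dots> = card (X \<inter> W1 r) + card (X \<inter> W2 r)"
    using f W_disj by (intro card_Un_disjoint) auto
  finally show ?thesis .
qed

lemma F_card:
  assumes "S \<subseteq> H_V r" "F1 r S \<or> F2 r S"
  shows "r + 2 \<le> card S"
proof -
  have cs: "card S = card (S \<inter> W1 r) + card (S \<inter> W2 r)" using card_split[OF assms(1)] .
  from assms(2) show ?thesis
  proof
    assume F: "F1 r S"
    then obtain x where x: "x \<in> S" "x \<in> {2*r+3,2*r+4}" by (auto simp: F1_def)
    then have "x \<in> S \<inter> W2 r" by (auto simp: W2_def)
    then have "card (S \<inter> W2 r) \<ge> 1"
      using assms(1) fin_HV by (metis One_nat_def Suc_leI card_gt_0_iff empty_iff finite_Int finite_subset)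
    then show ?thesis using cs F by (simp add: F1_def)
  next
    assume F: "F2 r S"
    then obtain x where x: "x \<in> S" "x \<in> {r+1,r+2}" by (auto simp: F2_def)
    then have "x \<in> S \<inter> W1 r" by (auto simp: W1_def)
    then have "card (S \<inter> W1 r) \<ge> 1"
      using assms(1) fin_HV by (metis One_nat_def Suc_leI card_gt_0_iff empty_iff finite_Int finite_subset)
    then show ?thesis using cs F by (simp add: F2_def)
  qed
qed

lemma zfs_card: "zero_forcing_set (H_V r) (H_E r) S \<Longrightarrow> r + 2 \<le> card S"
  using F_card zfs_iff by blast

definition S1 :: "nat \<Rightarrow> nat set" where "S1 r = insert (2*r+3) {1..r+1}"
definition S2 :: "nat \<Rightarrow> nat set" where "S2 r = insert (r+1) {r+3..2*r+3}"

lemma S1_props: "zero_forcing_set (H_V r) (H_E r) (S1 r)" "card (S1 r) = r+2"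
proof -
  have "S1 r \<inter> W1 r = {1..r+1}" by (auto simp: S1_def W1_def)
  then have "F1 r (S1 r)" by (simp add: F1_def S1_def)
  moreover have "S1 r \<subseteq> H_V r" by (auto simp: S1_def H_V_def)
  ultimately show "zero_forcing_set (H_V r) (H_E r) (S1 r)" using zfs_iff by blast
  show "card (S1 r) = r+2" by (simp add: S1_def)
qed

lemma S2_props: "zero_forcing_set (H_V r) (H_E r) (S2 r)" "card (S2 r) = r+2"
proof -
  have "S2 r \<inter> W2 r = {r+3..2*r+3}" by (auto simp: S2_def W2_def)
  then have "F2 r (S2 r)" by (simp add: F2_def S2_def)
  moreover have "S2 r \<subseteq> H_V r" by (auto simp: S2_def H_V_def)
  ultimately show "zero_forcing_set (H_V r) (H_E r) (S2 r)" using zfs_iff by blast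
  show "card (S2 r) = r+2" by (simp add: S2_def)
qed

lemma S2_W1: "card (S2 r \<inter> W1 r) = 1"
proof -
  have "S2 r \<inter> W1 r = {r+1}" by (auto simp: S2_def W1_def)
  then show ?thesis by simp
qed

lemma fin_zfs: "finite {S. zero_forcing_set (H_V r) (H_E r) S}"
proof -
  have "{S. zero_forcing_set (H_V r) (H_E r) S} \<subseteq> Pow (H_V r)" by (auto simp: zero_forcing_set_def)
  then show ?thesis using fin_HV finite_subset by blast
qed

lemma Z_val: "Z (H_V r) (H_E r) = r + 2"
  unfolding Z_def
proof (rule Min_eqI)
  show "finite (card ` {S. zero_forcing_set (H_V r) (H_E r) S})" using fin_zfs by simp
  show "\<And>y. y \<in> card ` {S. zero_forcing_set (H_V r) (H_E r) S} \<Longrightarrow> r + 2 \<le> y" using zfs_card by auto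
  show "r + 2 \<in> card ` {S. zero_forcing_set (H_V r) (H_E r) S}" by (rule image_eqI[where x="S1 r"]) (use S1_props in auto)
qed

lemma minimal_card:
  assumes M: "minimal_zero_forcing_set (H_V r) (H_E r) M"
  shows "card M = r + 2"
proof -
  have Z: "zero_forcing_set (H_V r) (H_E r) M" and min: "\<And>T. T \<subset> M \<Longrightarrow> \<not> zero_forcing_set (H_V r) (H_E r) T"
    using M by (auto simp: minimal_zero_forcing_set_def)
  have MV: "M \<subseteq> H_V r" and F: "F1 r M \<or> F2 r M" using Z zfs_iff by auto
  have fM: "finite M" using MV fin_HV finite_subset by blast
  obtain T where T: "T \<subseteq> M" "card T = r+2" "zero_forcing_set (H_V r) (H_E r) T"
  proof -
    from F show thesis
    proof
      assume F1: "F1 r M"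
      obtain x where x: "x \<in> M" "x \<in> {2*r+3,2*r+4}" using F1 by (auto simp: F1_def)
      obtain P where P: "P \<subseteq> M \<inter> W1 r" "card P = r+1" "finite P"
        using obtain_subset_with_card_n[of "r+1" "M \<inter> W1 r"] F1 by (auto simp: F1_def)
      have xP: "x \<notin> P" using P(1) x(2) by (auto simp: W1_def)
      have "P \<subseteq> insert x P \<inter> W1 r" using P by auto
      then have "card (insert x P \<inter> W1 r) \<ge> r+1" using P(2) by (metis card_mono finite_Int finite_insert P(3))
      then have "F1 r (insert x P)" using x by (auto simp: F1_def)
      moreover have "insert x P \<subseteq> H_V r" using P x MV by auto
      ultimately have "zero_forcing_set (H_V r) (H_E r) (insert x P)" using zfs_iff by blast
      moreover have "card (insert x P) = r+2" using xP P by simp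
      moreover have "insert x P \<subseteq> M" using x P by auto
      ultimately show thesis using that by blast
    next
      assume F2: "F2 r M"
      obtain x where x: "x \<in> M" "x \<in> {r+1,r+2}" using F2 by (auto simp: F2_def)
      obtain P where P: "P \<subseteq> M \<inter> W2 r" "card P = r+1" "finite P"
        using obtain_subset_with_card_n[of "r+1" "M \<inter> W2 r"] F2 by (auto simp: F2_def)
      have xP: "x \<notin> P" using P(1) x(2) by (auto simp: W2_def)
      have "P \<subseteq> insert x P \<inter> W2 r" using P by auto
      then have "card (insert x P \<inter> W2 r) \<ge> r+1" using P(2) by (metis card_mono finite_Int finite_insert P(3))
      then have "F2 r (insert x P)" using x by (auto simp: F2_def)
      moreover have "insert x P \<subseteq> H_V r" using P x MV by auto
      ultimately have "zero_forcing_set (H_V r) (H_E r) (insert x P)" using zfs_iff by blast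
      moreover have "card (insert x P) = r+2" using xP P by simp
      moreover have "insert x P \<subseteq> M" using x P by auto
      ultimately show thesis using that by blast
    qed
  qed
  have "T = M" using T min by blast
  then show ?thesis using T by simp
qed

lemma S1_minimal: "minimal_zero_forcing_set (H_V r) (H_E r) (S1 r)"
  unfolding minimal_zero_forcing_set_def
proof (intro conjI allI impI)
  show "zero_forcing_set (H_V r) (H_E r) (S1 r)" by (rule S1_props)
  fix T assume "T \<subset> S1 r"
  then have "card T < card (S1 r)" by (intro psubset_card_mono) (auto simp: S1_def)
  then have "card T < r + 2" using S1_props by simp
  then show "\<not> zero_forcing_set (H_V r) (H_E r) T" using zfs_card by fastforce
qed

lemma Zbar_val: "Zbar (H_V r) (H_E r) = r + 2"
  unfolding Zbar_def
proof (rule Max_eqI)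
  have "{S. minimal_zero_forcing_set (H_V r) (H_E r) S} \<subseteq> {S. zero_forcing_set (H_V r) (H_E r) S}"
    by (auto simp: minimal_zero_forcing_set_def)
  then show "finite (card ` {S. minimal_zero_forcing_set (H_V r) (H_E r) S})"
    using fin_zfs finite_subset by blast
  show "\<And>y. y \<in> card ` {S. minimal_zero_forcing_set (H_V r) (H_E r) S} \<Longrightarrow> y \<le> r + 2"
    using minimal_card by auto
  show "r + 2 \<in> card ` {S. minimal_zero_forcing_set (H_V r) (H_E r) S}"
    by (rule image_eqI[where x="S1 r"]) (use S1_minimal S1_props(2) in auto)
qed


definition RR :: "nat \<Rightarrow> nat \<Rightarrow> (nat set \<times> nat set) set" where
  "RR r k = {(A, B). A \<in> TAR_vertices (H_V r) (H_E r) k \<and> B \<in> TAR_vertices (H_V r) (H_E r) k \<and> TAR_adj A B}"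

lemma conn_alt: "TAR_connected (H_V r) (H_E r) k \<longleftrightarrow> TAR_vertices (H_V r) (H_E r) k \<noteq> {} \<and>
   (\<forall>S\<in>TAR_vertices (H_V r) (H_E r) k. \<forall>T\<in>TAR_vertices (H_V r) (H_E r) k. (S, T) \<in> (RR r k)\<^sup>*)"
  by (simp add: TAR_connected_def RR_def)

lemma interval_aux:
  assumes "finite D"
  shows "A \<inter> D = {} \<Longrightarrow> (\<forall>X. A \<subseteq> X \<and> X \<subseteq> A \<union> D \<longrightarrow> X \<in> TAR_vertices (H_V r) (H_E r) k) \<Longrightarrow>
    (A, A \<union> D) \<in> (RR r k)\<^sup>* \<and> (A \<union> D, A) \<in> (RR r k)\<^sup>*"
  using assms
proof (induction D rule: finite_induct)
  case empty then show ?case by simp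
next
  case (insert d D)
  have p1: "A \<inter> D = {}" using insert.prems(1) by auto
  have p2: "\<forall>X. A \<subseteq> X \<and> X \<subseteq> A \<union> D \<longrightarrow> X \<in> TAR_vertices (H_V r) (H_E r) k"
  proof (intro allI impI)
    fix X assume "A \<subseteq> X \<and> X \<subseteq> A \<union> D"
    then have "A \<subseteq> X \<and> X \<subseteq> A \<union> insert d D" by auto
    then show "X \<in> TAR_vertices (H_V r) (H_E r) k" using insert.prems(2) by simp
  qed
  have IH: "(A, A \<union> D) \<in> (RR r k)\<^sup>* \<and> (A \<union> D, A) \<in> (RR r k)\<^sup>*"
    using insert.IH[OF p1 p2] .
  have dA: "d \<notin> A \<union> D" using insert.hyps(2) insert.prems(1) by auto
  have m1: "A \<union> D \<in> TAR_vertices (H_V r) (H_E r) k"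
    using insert.prems(2) by (simp add: subset_insertI2)
  have m2: "insert d (A \<union> D) \<in> TAR_vertices (H_V r) (H_E r) k"
  proof -
    have "A \<subseteq> insert d (A \<union> D) \<and> insert d (A \<union> D) \<subseteq> A \<union> insert d D" by auto
    then show ?thesis using insert.prems(2) by simp
  qed
  have sd1: "((A \<union> D) - insert d (A \<union> D)) \<union> (insert d (A \<union> D) - (A \<union> D)) = {d}" using dA by auto
  have sd2: "(insert d (A \<union> D) - (A \<union> D)) \<union> ((A \<union> D) - insert d (A \<union> D)) = {d}" using dA by auto
  have e1: "(A \<union> D, insert d (A \<union> D)) \<in> RR r k" using m1 m2 sd1 by (simp add: RR_def TAR_adj_def)
  have e2: "(insert d (A \<union> D), A \<union> D) \<in> RR r k" using m1 m2 sd2 by (simp add: RR_def TAR_adj_def)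
  have eq: "A \<union> insert d D = insert d (A \<union> D)" by auto
  show ?case unfolding eq
    using rtrancl_into_rtrancl[OF conjunct1[OF IH] e1] converse_rtrancl_into_rtrancl[OF e2 conjunct2[OF IH]]
    by blast
qed

lemma interval:
  assumes "A \<subseteq> B" "finite B" "\<And>X. A \<subseteq> X \<Longrightarrow> X \<subseteq> B \<Longrightarrow> X \<in> TAR_vertices (H_V r) (H_E r) k"
  shows "(A, B) \<in> (RR r k)\<^sup>* \<and> (B, A) \<in> (RR r k)\<^sup>*"
proof -
  have eq: "A \<union> (B - A) = B" using assms(1) by auto
  have d: "A \<inter> (B - A) = {}" by auto
  have f: "finite (B - A)" using assms(2) by simp
  have all: "\<forall>X. A \<subseteq> X \<and> X \<subseteq> A \<union> (B - A) \<longrightarrow> X \<in> TAR_vertices (H_V r) (H_E r) k"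
    unfolding eq using assms(3) by blast
  have "(A, A \<union> (B - A)) \<in> (RR r k)\<^sup>* \<and> (A \<union> (B - A), A) \<in> (RR r k)\<^sup>*"
    using interval_aux[OF f d all] .
  then show ?thesis unfolding eq .
qed

definition H1 :: "nat \<Rightarrow> nat set" where "H1 r = W1 r \<union> {2*r+3, 2*r+4}"
definition H2 :: "nat \<Rightarrow> nat set" where "H2 r = W2 r \<union> {r+1, r+2}"

lemma TV_iff: "X \<in> TAR_vertices (H_V r) (H_E r) k \<longleftrightarrow> X \<subseteq> H_V r \<and> (F1 r X \<or> F2 r X) \<and> card X \<le> k"
  by (simp add: TAR_vertices_def zfs_iff)

lemma fin_sub: "X \<subseteq> H_V r \<Longrightarrow> finite X" using fin_HV finite_subset by blast

lemma to_hub1: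
  assumes S: "S \<subseteq> H_V r" "F1 r S" "card S \<le> k" and k: "r + 4 \<le> k"
  shows "(S, H1 r) \<in> (RR r k)\<^sup>* \<and> (H1 r, S) \<in> (RR r k)\<^sup>*"
proof -
  obtain x where x: "x \<in> S" "x \<in> {2*r+3,2*r+4}" using S(2) by (auto simp: F1_def)
  define A where "A = insert x (S \<inter> W1 r)"
  have AW: "A \<inter> W1 r = S \<inter> W1 r" using x by (auto simp: A_def W1_def)
  have mono: "F1 r X" if "A \<subseteq> X" "X \<subseteq> H_V r" for X
  proof -
    have "A \<inter> W1 r \<subseteq> X \<inter> W1 r" using that by auto
    then have "card (A \<inter> W1 r) \<le> card (X \<inter> W1 r)" using fin_sub[OF that(2)] by (intro card_mono) auto
    moreover have "x \<in> X" using that(1) unfolding A_def by blast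
    moreover have "r + 1 \<le> card (A \<inter> W1 r)" using S(2) unfolding AW F1_def by blast
    ultimately show ?thesis using x(2) unfolding F1_def by auto
  qed
  have HV: "H1 r \<subseteq> H_V r" by (auto simp: H1_def W1_def H_V_def)
  have cH: "card (H1 r) = r + 4" by (simp add: H1_def W1_def)
  have a1: "(A, S) \<in> (RR r k)\<^sup>* \<and> (S, A) \<in> (RR r k)\<^sup>*"
  proof (rule interval)
    show "A \<subseteq> S" using x by (auto simp: A_def)
    show "finite S" using fin_sub[OF S(1)] .
    fix X assume X: "A \<subseteq> X" "X \<subseteq> S"
    have "card X \<le> card S" using X(2) fin_sub[OF S(1)] by (rule card_mono[rotated])
    moreover have "X \<subseteq> H_V r" using X S(1) by blast
    ultimately show "X \<in> TAR_vertices (H_V r) (H_E r) k" using mono[OF X(1)] S(3) by (simp add: TV_iff)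
  qed
  have a2: "(A, H1 r) \<in> (RR r k)\<^sup>* \<and> (H1 r, A) \<in> (RR r k)\<^sup>*"
  proof (rule interval)
    show "A \<subseteq> H1 r" using x by (auto simp: A_def H1_def)
    show "finite (H1 r)" using fin_sub[OF HV] .
    fix X assume X: "A \<subseteq> X" "X \<subseteq> H1 r"
    have "card X \<le> card (H1 r)" using X(2) fin_sub[OF HV] by (rule card_mono[rotated])
    moreover have "X \<subseteq> H_V r" using X HV by blast
    ultimately show "X \<in> TAR_vertices (H_V r) (H_E r) k" using mono[OF X(1)] cH k by (simp add: TV_iff)
  qed
  show ?thesis using rtrancl_trans[OF conjunct2[OF a1] conjunct1[OF a2]] rtrancl_trans[OF conjunct2[OF a2] conjunct1[OF a1]] by blast
qed

lemma to_hub2: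
  assumes S: "S \<subseteq> H_V r" "F2 r S" "card S \<le> k" and k: "r + 4 \<le> k"
  shows "(S, H2 r) \<in> (RR r k)\<^sup>* \<and> (H2 r, S) \<in> (RR r k)\<^sup>*"
proof -
  obtain x where x: "x \<in> S" "x \<in> {r+1,r+2}" using S(2) by (auto simp: F2_def)
  define A where "A = insert x (S \<inter> W2 r)"
  have AW: "A \<inter> W2 r = S \<inter> W2 r" using x by (auto simp: A_def W2_def)
  have mono: "F2 r X" if "A \<subseteq> X" "X \<subseteq> H_V r" for X
  proof -
    have "A \<inter> W2 r \<subseteq> X \<inter> W2 r" using that by auto
    then have "card (A \<inter> W2 r) \<le> card (X \<inter> W2 r)" using fin_sub[OF that(2)] by (intro card_mono) auto
    moreover have "x \<in> X" using that(1) unfolding A_def by blast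
    moreover have "r + 1 \<le> card (A \<inter> W2 r)" using S(2) unfolding AW F2_def by blast
    ultimately show ?thesis using x(2) unfolding F2_def by auto
  qed
  have HV: "H2 r \<subseteq> H_V r" by (auto simp: H2_def W2_def H_V_def)
  have cH: "card (H2 r) = r + 4" by (simp add: H2_def W2_def)
  have a1: "(A, S) \<in> (RR r k)\<^sup>* \<and> (S, A) \<in> (RR r k)\<^sup>*"
  proof (rule interval)
    show "A \<subseteq> S" using x by (auto simp: A_def)
    show "finite S" using fin_sub[OF S(1)] .
    fix X assume X: "A \<subseteq> X" "X \<subseteq> S"
    have "card X \<le> card S" using X(2) fin_sub[OF S(1)] by (rule card_mono[rotated])
    moreover have "X \<subseteq> H_V r" using X S(1) by blast
    ultimately show "X \<in> TAR_vertices (H_V r) (H_E r) k" using mono[OF X(1)] S(3) by (simp add: TV_iff)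
  qed
  have a2: "(A, H2 r) \<in> (RR r k)\<^sup>* \<and> (H2 r, A) \<in> (RR r k)\<^sup>*"
  proof (rule interval)
    show "A \<subseteq> H2 r" using x by (auto simp: A_def H2_def)
    show "finite (H2 r)" using fin_sub[OF HV] .
    fix X assume X: "A \<subseteq> X" "X \<subseteq> H2 r"
    have "card X \<le> card (H2 r)" using X(2) fin_sub[OF HV] by (rule card_mono[rotated])
    moreover have "X \<subseteq> H_V r" using X HV by blast
    ultimately show "X \<in> TAR_vertices (H_V r) (H_E r) k" using mono[OF X(1)] cH k by (simp add: TV_iff)
  qed
  show ?thesis using rtrancl_trans[OF conjunct2[OF a1] conjunct1[OF a2]] rtrancl_trans[OF conjunct2[OF a2] conjunct1[OF a1]] by blast
qed

lemma conn_big: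
  assumes r: "r \<ge> 2" and k: "2*r+2 \<le> k"
  shows "TAR_connected (H_V r) (H_E r) k"
proof -
  define W where "W = H_V r - {1, r+3}"
  have WV: "W \<subseteq> H_V r" by (auto simp: W_def)
  have cW: "card W = 2*r+2" using r by (simp add: W_def H_V_def card_Diff_subset)
  have "W \<inter> W1 r = W1 r - {1}" by (auto simp: W_def W1_def H_V_def)
  then have "card (W \<inter> W1 r) = r+1" by (simp add: W1_def)
  then have F1W: "F1 r W" by (simp add: F1_def W_def H_V_def)
  have "W \<inter> W2 r = W2 r - {r+3}" by (auto simp: W_def W2_def H_V_def)
  then have "card (W \<inter> W2 r) = r+1" by (simp add: W2_def)
  then have F2W: "F2 r W" by (simp add: F2_def W_def H_V_def)
  have k4: "r + 4 \<le> k" using k r by simp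
  have cWk: "card W \<le> k" using cW k by simp
  have w1: "(W, H1 r) \<in> (RR r k)\<^sup>* \<and> (H1 r, W) \<in> (RR r k)\<^sup>*" using to_hub1[OF WV F1W cWk k4] .
  have w2: "(W, H2 r) \<in> (RR r k)\<^sup>* \<and> (H2 r, W) \<in> (RR r k)\<^sup>*" using to_hub2[OF WV F2W cWk k4] .
  have h21: "(H2 r, H1 r) \<in> (RR r k)\<^sup>*" using rtrancl_trans[OF conjunct2[OF w2] conjunct1[OF w1]] .
  have h12: "(H1 r, H2 r) \<in> (RR r k)\<^sup>*" using rtrancl_trans[OF conjunct2[OF w1] conjunct1[OF w2]] .
  have hub: "(S, H1 r) \<in> (RR r k)\<^sup>* \<and> (H1 r, S) \<in> (RR r k)\<^sup>*"
    if "S \<in> TAR_vertices (H_V r) (H_E r) k" for S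
  proof -
    have S: "S \<subseteq> H_V r" "F1 r S \<or> F2 r S" "card S \<le> k" using that by (auto simp: TV_iff)
    from S(2) show ?thesis
    proof
      assume "F1 r S" then show ?thesis using to_hub1[OF S(1) _ S(3) k4] by blast
    next
      assume "F2 r S"
      then have a: "(S, H2 r) \<in> (RR r k)\<^sup>* \<and> (H2 r, S) \<in> (RR r k)\<^sup>*" using to_hub2[OF S(1) _ S(3) k4] by blast
      show ?thesis using rtrancl_trans[OF conjunct1[OF a] h21] rtrancl_trans[OF h12 conjunct2[OF a]] by blast
    qed
  qed
  have "S1 r \<in> TAR_vertices (H_V r) (H_E r) k"
    using S1_props k unfolding TAR_vertices_def by simp
  then have ne: "TAR_vertices (H_V r) (H_E r) k \<noteq> {}" by blast
  show ?thesis unfolding conn_alt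
  proof (intro conjI ballI)
    show "TAR_vertices (H_V r) (H_E r) k \<noteq> {}" by (rule ne)
    fix S T assume "S \<in> TAR_vertices (H_V r) (H_E r) k" "T \<in> TAR_vertices (H_V r) (H_E r) k"
    then show "(S, T) \<in> (RR r k)\<^sup>*" using hub by (meson rtrancl_trans)
  qed
qed

lemma adj_cases:
  assumes "TAR_adj X Y"
  shows "(\<exists>z. z \<notin> Y \<and> X = insert z Y) \<or> (\<exists>z. z \<notin> X \<and> Y = insert z X)"
proof -
  obtain z where z: "(X - Y) \<union> (Y - X) = {z}" using assms unfolding TAR_adj_def by (rule card_1_singletonE)
  have zin: "z \<in> (X - Y) \<union> (Y - X)" using z by simp
  have sub: "\<And>y. y \<in> (X - Y) \<union> (Y - X) \<Longrightarrow> y = z" using z by simp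
  show ?thesis
  proof cases
    assume zX: "z \<in> X"
    then have zY: "z \<notin> Y" using zin by simp
    have "Y \<subseteq> X" using sub zX by blast
    moreover have "X \<subseteq> insert z Y" using sub by blast
    ultimately have "X = insert z Y" using zX by blast
    then show ?thesis using zY by blast
  next
    assume zX: "z \<notin> X"
    then have zY: "z \<in> Y" using zin by simp
    have "X \<subseteq> Y" using sub zY by blast
    moreover have "Y \<subseteq> insert z X" using sub by blast
    ultimately have "Y = insert z X" using zY by blast
    then show ?thesis using zX by blast
  qed
qed

lemma preserve:
  assumes X: "X \<in> TAR_vertices (H_V r) (H_E r) k" and Y: "Y \<in> TAR_vertices (H_V r) (H_E r) k"
    and k: "k \<le> 2*r+1" and adj: "TAR_adj X Y" and cX: "r+1 \<le> card (X \<inter> W1 r)"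
  shows "r+1 \<le> card (Y \<inter> W1 r)"
proof (rule ccontr)
  assume nc: "\<not> ?thesis"
  have XV: "X \<subseteq> H_V r" "card X \<le> k" using X TV_iff by auto
  have YV: "Y \<subseteq> H_V r" "F1 r Y \<or> F2 r Y" using Y TV_iff by auto
  then have F2: "F2 r Y" using nc by (auto simp: F1_def)
  from adj_cases[OF adj] show False
  proof
    assume "\<exists>z. z \<notin> Y \<and> X = insert z Y"
    then obtain z where z: "z \<notin> Y" "X = insert z Y" by blast
    show False
    proof cases
      assume zW: "z \<in> W1 r"
      have "X \<inter> W2 r = Y \<inter> W2 r" using z zW W_disj by auto
      then have "card X \<ge> (r+1) + (r+1)" using card_split[OF XV(1)] cX F2 by (simp add: F2_def)
      then show False using XV k by simp
    next
      assume "z \<notin> W1 r"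
      then have "X \<inter> W1 r = Y \<inter> W1 r" using z by auto
      then show False using nc cX by simp
    qed
  next
    assume "\<exists>z. z \<notin> X \<and> Y = insert z X"
    then obtain z where z: "Y = insert z X" by blast
    have "X \<inter> W1 r \<subseteq> Y \<inter> W1 r" using z by auto
    then have "card (X \<inter> W1 r) \<le> card (Y \<inter> W1 r)" using fin_sub[OF YV(1)] by (intro card_mono) auto
    then show False using nc cX by simp
  qed
qed

lemma disconn:
  assumes r: "r \<ge> 2" and k: "k \<le> 2*r+1"
  shows "\<not> TAR_connected (H_V r) (H_E r) k"
proof
  assume C: "TAR_connected (H_V r) (H_E r) k"
  then obtain S where "S \<in> TAR_vertices (H_V r) (H_E r) k" unfolding conn_alt by auto
  then have "zero_forcing_set (H_V r) (H_E r) S" "card S \<le> k" unfolding TAR_vertices_def by auto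
  then have "r + 2 \<le> k" using zfs_card[of r S] by linarith
  then have m1: "S1 r \<in> TAR_vertices (H_V r) (H_E r) k" and m2: "S2 r \<in> TAR_vertices (H_V r) (H_E r) k"
    using S1_props S2_props unfolding TAR_vertices_def by simp_all
  then have path: "(S1 r, S2 r) \<in> (RR r k)\<^sup>*" using C unfolding conn_alt by blast
  have c1: "r+1 \<le> card (S1 r \<inter> W1 r)"
  proof -
    have "S1 r \<inter> W1 r = {1..r+1}" by (auto simp: S1_def W1_def)
    then show ?thesis by simp
  qed
  have "r+1 \<le> card (S2 r \<inter> W1 r)" using path
  proof (induction rule: rtrancl_induct)
    case base then show ?case using c1 .
  next
    case (step y z)
    have "y \<in> TAR_vertices (H_V r) (H_E r) k" "z \<in> TAR_vertices (H_V r) (H_E r) k" "TAR_adj y z"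
      using step.hyps(2) unfolding RR_def by auto
    then show ?case using preserve[OF _ _ k _ step.IH] by blast
  qed
  then show False using S2_W1 r by simp
qed

lemma z0_lower_val: assumes "r \<ge> 2" shows "z0_lower (H_V r) (H_E r) = 2*r+2"
  unfolding z0_lower_def
proof (rule Least_equality)
  show "TAR_connected (H_V r) (H_E r) (2*r+2)" using conn_big[OF assms] by simp
  fix y assume "TAR_connected (H_V r) (H_E r) y"
  then show "2*r+2 \<le> y" using disconn[OF assms, of y] by linarith
qed

lemma z0_val: assumes "r \<ge> 2" shows "z0 (H_V r) (H_E r) = 2*r+2"
  unfolding z0_def
proof (rule Least_equality)
  show "\<forall>i. 2*r+2 \<le> i \<and> i \<le> card (H_V r) \<longrightarrow> TAR_connected (H_V r) (H_E r) i"
    using conn_big[OF assms] by auto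
  fix y assume A: "\<forall>i. y \<le> i \<and> i \<le> card (H_V r) \<longrightarrow> TAR_connected (H_V r) (H_E r) i"
  show "2*r+2 \<le> y"
  proof (rule ccontr)
    assume "\<not> ?thesis"
    then have "y \<le> 2*r+1" by simp
    moreover have "2*r+1 \<le> card (H_V r)" by (simp add: H_V_def)
    ultimately have "TAR_connected (H_V r) (H_E r) (2*r+1)" using A by blast
    then show False using disconn[OF assms] by simp
  qed
qed

theorem proposition3p4:
  fixes r :: nat
  assumes "r \<ge> 2"
  shows "Z (H_V r) (H_E r) = r + 2 \<and> Zbar (H_V r) (H_E r) = r + 2 \<and>
         z0_lower (H_V r) (H_E r) = 2*r + 2 \<and> z0 (H_V r) (H_E r) = 2*r + 2 \<and>
         2*r + 2 = Zbar (H_V r) (H_E r) + r"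
  using Z_val Zbar_val z0_lower_val[OF assms] z0_val[OF assms] by simp

end
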